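(* Let $(E,p,X)$ and $(F,q,Y)$ be étalé spaces over Boolean spaces and let $\varphi\colon(E,p,X)\to(F,q,Y)$ be a proper continuous relational covering morphism with underlying map $\overline{\varphi}\colon X\to Y$. Then the map $\hat\varphi\colon F^{\ast}\to E^{\ast}$, $x\mapsto\varphi^{-1}(x)$, is well defined and, together with the map $Y^{\ast}\to X^{\ast}$, $U\mapsto\overline{\varphi}^{-1}(U)$, is a morphism of Boolean sets from $\widetilde q\colon F^{\ast}\to Y^{\ast}$ to $\widetilde p\colon E^{\ast}\to X^{\ast}$.
   Context: A Boolean space is a Hausdorff space with a basis of compact-open sets. An étalé space $(E,p,X)$: surjective local homeomorphism $p\colon E\to X$. A local section is an open $A\subseteq E$ on which $p$ is injective. For an étalé space $(E,p,X)$, $X^{\ast}$ is the Boolean algebra of compact-open subsets of $X$, $E^{\ast}$ the set of compact-open local sections, $\widetilde p(C)=p(C)$, and restrictions are $C|^A_B=C\cap p^{-1}(B)$ for compact-open $A\supseteq B$ and $p(C)=A$; this is a Boolean set. A relational morphism $\varphi\colon(E,p,X)\to(F,q,Y)$: a map $\varphi\colon E\to\mathsf P(F)$ and a map $\overline{\varphi}\colon X\to Y$ with $\varphi(e)\subseteq q^{-1}(\overline{\varphi}(p(e)))$. Locally injective: $p(e)=p(e')$ and $\varphi(e)\cap\varphi(e')\neq\emptyset$ imply $e=e'$. Locally surjective: if $y\in F$ and $q(y)=\overline{\varphi}(u)$, $u\in X$, then some $e$ with $p(e)=u$ has $y\in\varphi(e)$. Relational covering morphism: both. $\varphi^{-1}(A)=\{e:\varphi(e)\cap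 A\neq\emptyset\}$; continuous/proper: preimages of open/compact sets are open/compact. Boolean sets and their morphisms: a "Boolean algebra" is a generalized Boolean algebra (relatively complemented distributive lattice with $0$). A Boolean set is a presheaf of sets $p\colon X\to B$ over a Boolean algebra (pairwise disjoint $X_e$, restrictions $x|^e_f$ for $e\ge f$, functorial) with all $X_e\ne\emptyset$, such that under the order $x\le y$ iff $p(x)\le p(y)$ and $x=y|^{p(y)}_{p(x)}$ there is a least element $0$, any $x,y$ with $x\wedge y$ existing and $p(x\wedge y)=p(x)\wedge p(y)$ have a join, and $p(x)=0\Rightarrow x=0$. A morphism of Boolean sets $(X,p,B_1)\to(Y,q,B_2)$ is $\psi\colon X\to Y$ with a Boolean algebra morphism $\overline{\psi}\colon B_1\to B_2$ such that $q\psi=\overline{\psi}p$ and $\psi(x|^a_b)=\psi(x)|^{\overline{\psi}(a)}_{\overline{\psi}(b)}$. *)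

theory Defs
  imports "HOL-Analysis.Analysis"
begin

definition boolean_space :: "'a topology \<Rightarrow> bool" where
  "boolean_space X \<longleftrightarrow> Hausdorff_space X \<and>
     (\<forall>U x. openin X U \<and> x \<in> U \<longrightarrow>
        (\<exists>K. compactin X K \<and> openin X K \<and> x \<in> K \<and> K \<subseteq> U))"

definition local_homeomorphism :: "'e topology \<Rightarrow> 'x topology \<Rightarrow> ('e \<Rightarrow> 'x) \<Rightarrow> bool" where
  "local_homeomorphism E X p \<longleftrightarrow> continuous_map E X p \<and>
     (\<forall>e\<in>topspace E. \<exists>U. openin E U \<and> e \<in> U \<and> openin X (p ` U) \<and>
        homeomorphic_map (subtopology E U) (subtopology X (p ` U)) p)"

definition etale_space :: "'e topology \<Rightarrow> ('e \<Rightarrow> 'x) \<Rightarrow> 'x topology \<Rightarrow> bool" where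
  "etale_space E p X \<longleftrightarrow> local_homeomorphism E X p \<and> p ` topspace E = topspace X"

definition local_section :: "'e topology \<Rightarrow> ('e \<Rightarrow> 'x) \<Rightarrow> 'e set \<Rightarrow> bool" where
  "local_section E p A \<longleftrightarrow> openin E A \<and> inj_on p A"

definition compact_opens :: "'x topology \<Rightarrow> 'x set set" where
  "compact_opens X = {U. compactin X U \<and> openin X U}"

definition co_sections :: "'e topology \<Rightarrow> ('e \<Rightarrow> 'x) \<Rightarrow> 'e set set" where
  "co_sections E p = {C. compactin E C \<and> local_section E p C}"

text \<open>Restriction C|^A_B = C \<inter> p^{-1}(B) (A is p(C), unused).\<close>
definition etale_restr :: "'e topology \<Rightarrow> ('e \<Rightarrow> 'x) \<Rightarrow> 'x set \<Rightarrow> 'x set \<Rightarrow> 'e set \<Rightarrow> 'e set" where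
  "etale_restr E p A B C = C \<inter> {e \<in> topspace E. p e \<in> B}"

definition relational_morphism ::
  "'e topology \<Rightarrow> ('e \<Rightarrow> 'x) \<Rightarrow> 'x topology \<Rightarrow> 'f topology \<Rightarrow> ('f \<Rightarrow> 'y) \<Rightarrow> 'y topology \<Rightarrow>
   ('e \<Rightarrow> 'f set) \<Rightarrow> ('x \<Rightarrow> 'y) \<Rightarrow> bool" where
  "relational_morphism E p X F q Y phi phib \<longleftrightarrow>
     phib \<in> topspace X \<rightarrow> topspace Y \<and>
     (\<forall>e\<in>topspace E. phi e \<subseteq> {y \<in> topspace F. q y = phib (p e)})"

definition locally_injective ::
  "'e topology \<Rightarrow> ('e \<Rightarrow> 'x) \<Rightarrow> ('e \<Rightarrow> 'f set) \<Rightarrow> bool" where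
  "locally_injective E p phi \<longleftrightarrow>
     (\<forall>e\<in>topspace E. \<forall>e'\<in>topspace E. p e = p e' \<and> phi e \<inter> phi e' \<noteq> {} \<longrightarrow> e = e')"

definition locally_surjective ::
  "'e topology \<Rightarrow> ('e \<Rightarrow> 'x) \<Rightarrow> 'x topology \<Rightarrow> 'f topology \<Rightarrow> ('f \<Rightarrow> 'y) \<Rightarrow>
   ('e \<Rightarrow> 'f set) \<Rightarrow> ('x \<Rightarrow> 'y) \<Rightarrow> bool" where
  "locally_surjective E p X F q phi phib \<longleftrightarrow>
     (\<forall>y\<in>topspace F. \<forall>u\<in>topspace X. q y = phib u \<longrightarrow>
        (\<exists>e\<in>topspace E. p e = u \<and> y \<in> phi e))"

definition relational_covering_morphism ::
  "'e topology \<Rightarrow> ('e \<Rightarrow> 'x) \<Rightarrow> 'x topology \<Rightarrow> 'f topology \<Rightarrow> ('f \<Rightarrow> 'y) \<Rightarrow> 'y topology \<Rightarrow>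
   ('e \<Rightarrow> 'f set) \<Rightarrow> ('x \<Rightarrow> 'y) \<Rightarrow> bool" where
  "relational_covering_morphism E p X F q Y phi phib \<longleftrightarrow>
     relational_morphism E p X F q Y phi phib \<and> locally_injective E p phi \<and>
     locally_surjective E p X F q phi phib"

definition rel_preimage :: "'e topology \<Rightarrow> ('e \<Rightarrow> 'f set) \<Rightarrow> 'f set \<Rightarrow> 'e set" where
  "rel_preimage E phi A = {e \<in> topspace E. phi e \<inter> A \<noteq> {}}"

definition rel_continuous :: "'e topology \<Rightarrow> 'f topology \<Rightarrow> ('e \<Rightarrow> 'f set) \<Rightarrow> bool" where
  "rel_continuous E F phi \<longleftrightarrow> (\<forall>A. openin F A \<longrightarrow> openin E (rel_preimage E phi A))"

definition rel_proper :: "'e topology \<Rightarrow> 'f topology \<Rightarrow> ('e \<Rightarrow> 'f set) \<Rightarrow> bool" where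
  "rel_proper E F phi \<longleftrightarrow> (\<forall>A. compactin F A \<longrightarrow> compactin E (rel_preimage E phi A))"

definition ba_hom :: "'a set set \<Rightarrow> 'b set set \<Rightarrow> ('a set \<Rightarrow> 'b set) \<Rightarrow> bool" where
  "ba_hom B1 B2 f \<longleftrightarrow> (\<forall>a\<in>B1. f a \<in> B2) \<and> f {} = {} \<and>
     (\<forall>a\<in>B1. \<forall>b\<in>B1. f (a \<union> b) = f a \<union> f b \<and> f (a \<inter> b) = f a \<inter> f b \<and> f (a - b) = f a - f b)"

text \<open>Morphism of Boolean sets (X1,p1,B1) -> (X2,p2,B2), where r1 a b x = x|^a_b.\<close>
definition bset_morphism ::
  "'s set \<Rightarrow> ('s \<Rightarrow> 'a set) \<Rightarrow> 'a set set \<Rightarrow> ('a set \<Rightarrow> 'a set \<Rightarrow> 's \<Rightarrow> 's) \<Rightarrow>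
   't set \<Rightarrow> ('t \<Rightarrow> 'b set) \<Rightarrow> 'b set set \<Rightarrow> ('b set \<Rightarrow> 'b set \<Rightarrow> 't \<Rightarrow> 't) \<Rightarrow>
   ('s \<Rightarrow> 't) \<Rightarrow> ('a set \<Rightarrow> 'b set) \<Rightarrow> bool" where
  "bset_morphism X1 p1 B1 r1 X2 p2 B2 r2 psi psib \<longleftrightarrow>
     (\<forall>x\<in>X1. psi x \<in> X2) \<and> ba_hom B1 B2 psib \<and>
     (\<forall>x\<in>X1. p2 (psi x) = psib (p1 x)) \<and>
     (\<forall>x\<in>X1. \<forall>a\<in>B1. \<forall>b\<in>B1. p1 x = a \<and> b \<subseteq> a \<longrightarrow>
         psi (r1 a b x) = r2 (psib a) (psib b) (psi x))"

end

theory Submission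
  imports Defs
begin

lemma lh_open:
  assumes lh: "local_homeomorphism E X p" and W: "openin E W"
  shows "openin X (p ` W)"
proof (subst openin_subopen, intro ballI)
  fix x assume "x \<in> p ` W"
  then obtain e where e: "e \<in> W" "x = p e" by blast
  have "e \<in> topspace E" using e W openin_subset by blast
  then obtain V where V: "openin E V" "e \<in> V" "openin X (p ` V)"
    "homeomorphic_map (subtopology E V) (subtopology X (p ` V)) p"
    using lh unfolding local_homeomorphism_def by blast
  have "openin (subtopology E V) (W \<inter> V)"
    using W by (auto simp: openin_subtopology)
  then have "openin (subtopology X (p ` V)) (p ` (W \<inter> V))"
    using homeomorphic_imp_open_map[OF V(4)] unfolding open_map_def by blast
  then have "openin X (p ` (W \<inter> V))" using V(3) openin_trans_full by blast
  then show "\<exists>T. openin X T \<and> x \<in> T \<and> T \<subseteq> p ` W"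
    using e V by blast
qed

lemma lh_piece:
  assumes lh: "local_homeomorphism F Y q" and bs: "boolean_space Y"
    and U: "openin Y U" and f: "f \<in> topspace F" "q f \<in> U"
  shows "\<exists>C. compactin F C \<and> openin F C \<and> openin Y (q ` C) \<and> q f \<in> q ` C \<and> q ` C \<subseteq> U"
proof -
  obtain V where V: "openin F V" "f \<in> V" "openin Y (q ` V)"
    "homeomorphic_map (subtopology F V) (subtopology Y (q ` V)) q"
    using lh f unfolding local_homeomorphism_def by blast
  have cq: "continuous_map F Y q" using lh unfolding local_homeomorphism_def by blast
  have "openin Y (q ` V \<inter> U)" using V U by blast
  then obtain K where K: "compactin Y K" "openin Y K" "q f \<in> K" "K \<subseteq> q ` V \<inter> U"
    using bs f V unfolding boolean_space_def by blast
  define C where "C = V \<inter> {x \<in> topspace F. q x \<in> K}"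
  have VF: "V \<subseteq> topspace F" using V openin_subset by blast
  have qC: "q ` C = K"
  proof
    show "q ` C \<subseteq> K" unfolding C_def by auto
    show "K \<subseteq> q ` C"
    proof
      fix k assume "k \<in> K"
      then obtain v where "v \<in> V" "q v = k" using K(4) by blast
      then show "k \<in> q ` C" unfolding C_def using VF \<open>k \<in> K\<close> by blast
    qed
  qed
  have oC: "openin F C" unfolding C_def
    using V(1) openin_continuous_map_preimage[OF cq K(2)] by blast
  have "compactin (subtopology Y (q ` V)) (q ` C)"
    using K qC by (simp add: compactin_subtopology)
  then have "compactin (subtopology F V) C"
    using homeomorphic_map_compactness[OF V(4), of C] unfolding C_def by auto
  then have "compactin F C" by (simp add: compactin_subtopology)
  then show ?thesis using oC qC K by blast
qed

theorem lemma3p10: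
  fixes E :: "'e topology" and p :: "'e \<Rightarrow> 'x" and X :: "'x topology"
    and F :: "'f topology" and q :: "'f \<Rightarrow> 'y" and Y :: "'y topology"
    and phi :: "'e \<Rightarrow> 'f set" and phib :: "'x \<Rightarrow> 'y"
  assumes "etale_space E p X" and "boolean_space X"
    and "etale_space F q Y" and "boolean_space Y"
    and "relational_covering_morphism E p X F q Y phi phib"
    and "rel_continuous E F phi" and "rel_proper E F phi"
  shows "(\<forall>C\<in>co_sections F q. rel_preimage E phi C \<in> co_sections E p) \<and>
         bset_morphism (co_sections F q) (\<lambda>C. q ` C) (compact_opens Y) (etale_restr F q)
                       (co_sections E p) (\<lambda>C. p ` C) (compact_opens X) (etale_restr E p)
                       (rel_preimage E phi) (\<lambda>U. {x \<in> topspace X. phib x \<in> U})"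
proof -
  note a = assms
  have lhE: "local_homeomorphism E X p" and lhF: "local_homeomorphism F Y q"
    and surjE: "p ` topspace E = topspace X" and surjF: "q ` topspace F = topspace Y"
    using a(1,3) unfolding etale_space_def by auto
  have cp: "continuous_map E X p" using lhE unfolding local_homeomorphism_def by blast
  have pX: "\<And>e. e \<in> topspace E \<Longrightarrow> p e \<in> topspace X" using surjE by blast
  have rm: "\<And>e. e \<in> topspace E \<Longrightarrow> phi e \<subseteq> {y \<in> topspace F. q y = phib (p e)}"
    and phibY: "\<And>x. x \<in> topspace X \<Longrightarrow> phib x \<in> topspace Y"
    using a(5) unfolding relational_covering_morphism_def relational_morphism_def by auto
  have li: "\<And>e e'. e \<in> topspace E \<Longrightarrow> e' \<in> topspace E \<Longrightarrow> p e = p e' \<Longrightarrow> phi e \<inter> phi e' \<noteq> {} \<Longrightarrow> e = e'"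
    using a(5) unfolding relational_covering_morphism_def locally_injective_def by blast
  have ls: "\<And>y u. y \<in> topspace F \<Longrightarrow> u \<in> topspace X \<Longrightarrow> q y = phib u \<Longrightarrow> \<exists>e\<in>topspace E. p e = u \<and> y \<in> phi e"
    using a(5) unfolding relational_covering_morphism_def locally_surjective_def by blast
  have rc: "\<And>A. openin F A \<Longrightarrow> openin E (rel_preimage E phi A)"
    using a(6) unfolding rel_continuous_def by blast
  have rp: "\<And>A. compactin F A \<Longrightarrow> compactin E (rel_preimage E phi A)"
    using a(7) unfolding rel_proper_def by blast
  have img: "p ` rel_preimage E phi C = {x \<in> topspace X. phib x \<in> q ` C}"
    if "C \<subseteq> topspace F" for C
  proof
    show "p ` rel_preimage E phi C \<subseteq> {x \<in> topspace X. phib x \<in> q ` C}"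
    proof
      fix x assume "x \<in> p ` rel_preimage E phi C"
      then obtain e y where "e \<in> topspace E" "x = p e" "y \<in> phi e" "y \<in> C"
        unfolding rel_preimage_def by blast
      then show "x \<in> {x \<in> topspace X. phib x \<in> q ` C}" using rm pX by force
    qed
  next
    show "{x \<in> topspace X. phib x \<in> q ` C} \<subseteq> p ` rel_preimage E phi C"
    proof
      fix x assume "x \<in> {x \<in> topspace X. phib x \<in> q ` C}"
      then obtain y where "x \<in> topspace X" "y \<in> C" "phib x = q y" by blast
      moreover then have "y \<in> topspace F" using that by blast
      ultimately obtain e where "e \<in> topspace E" "p e = x" "y \<in> phi e" using ls by metis
      then show "x \<in> p ` rel_preimage E phi C" unfolding rel_preimage_def using \<open>y \<in> C\<close> by blast
    qed
  qed
  have part1: "\<forall>C\<in>co_sections F q. rel_preimage E phi C \<in> co_sections E p"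
  proof
    fix C assume C: "C \<in> co_sections F q"
    then have cC: "compactin F C" and oC: "openin F C" and iC: "inj_on q C"
      unfolding co_sections_def local_section_def by auto
    have "inj_on p (rel_preimage E phi C)"
    proof (rule inj_onI)
      fix e e' assume "e \<in> rel_preimage E phi C" "e' \<in> rel_preimage E phi C" "p e = p e'"
      then obtain y y' where yy: "e \<in> topspace E" "e' \<in> topspace E" "y \<in> phi e" "y \<in> C"
        "y' \<in> phi e'" "y' \<in> C" unfolding rel_preimage_def by blast
      have "q y = phib (p e)" using rm[OF yy(1)] yy(3) by blast
      moreover have "q y' = phib (p e')" using rm[OF yy(2)] yy(5) by blast
      ultimately have "q y = q y'" using \<open>p e = p e'\<close> by simp
      then have "y = y'" using iC yy inj_onD by metis
      then show "e = e'" using li yy \<open>p e = p e'\<close> by blast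
    qed
    then show "rel_preimage E phi C \<in> co_sections E p"
      unfolding co_sections_def local_section_def using rc[OF oC] rp[OF cC] by blast
  qed
  have bahom: "ba_hom (compact_opens Y) (compact_opens X) (\<lambda>U. {x \<in> topspace X. phib x \<in> U})"
    unfolding ba_hom_def
  proof (intro conjI ballI)
    fix U assume U: "U \<in> compact_opens Y"
    then have cU: "compactin Y U" and oU: "openin Y U" unfolding compact_opens_def by auto
    define S where "S = {x \<in> topspace X. phib x \<in> U}"
    define D where "D = {f \<in> topspace F. q f \<in> U}"
    have UY: "U \<subseteq> topspace Y" using oU by (rule openin_subset)
    have "q ` D = U"
    proof
      show "q ` D \<subseteq> U" unfolding D_def by auto
      show "U \<subseteq> q ` D"
      proof
        fix u assume "u \<in> U"
        then have "u \<in> q ` topspace F" using UY surjF by blast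
        then obtain f where "f \<in> topspace F" "q f = u" by blast
        then show "u \<in> q ` D" unfolding D_def using \<open>u \<in> U\<close> by blast
      qed
    qed
    moreover have "D \<subseteq> topspace F" unfolding D_def by blast
    ultimately have "S = p ` rel_preimage E phi D" unfolding S_def using img[of D] by simp
    moreover have "openin F D" unfolding D_def
      using openin_continuous_map_preimage[OF _ oU] lhF unfolding local_homeomorphism_def by blast
    ultimately have oS: "openin X S" using lh_open[OF lhE rc] by simp
    define \<C> where "\<C> = {C. compactin F C \<and> openin F C \<and> openin Y (q ` C) \<and> q ` C \<subseteq> U}"
    have "U \<subseteq> \<Union> ((\<lambda>C. q ` C) ` \<C>)"
    proof
      fix y assume "y \<in> U"
      then have "y \<in> q ` topspace F" using UY surjF by blast
      then obtain f where "f \<in> topspace F" "q f = y" by blast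
      then show "y \<in> \<Union> ((\<lambda>C. q ` C) ` \<C>)"
        using lh_piece[OF lhF a(4) oU, of f] \<open>y \<in> U\<close> unfolding \<C>_def by blast
    qed
    moreover have "\<forall>K\<in>(\<lambda>C. q ` C) ` \<C>. openin Y K" unfolding \<C>_def by blast
    ultimately obtain \<G> where G: "finite \<G>" "\<G> \<subseteq> (\<lambda>C. q ` C) ` \<C>" "U \<subseteq> \<Union>\<G>"
      using cU unfolding compactin_def by meson
    then obtain \<D> where D: "\<D> \<subseteq> \<C>" "finite \<D>" "\<G> = (\<lambda>C. q ` C) ` \<D>"
      using finite_subset_image[OF G(1) G(2)] by blast
    have "S = \<Union> ((\<lambda>C. p ` rel_preimage E phi C) ` \<D>)"
    proof -
      have eq: "p ` rel_preimage E phi C = {x \<in> topspace X. phib x \<in> q ` C}" if "C \<in> \<D>" for C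
      proof -
        have "compactin F C" using that D(1) unfolding \<C>_def by blast
        then show ?thesis using img compactin_subset_topspace by blast
      qed
      have sub: "q ` C \<subseteq> U" if "C \<in> \<D>" for C using that D(1) unfolding \<C>_def by blast
      show ?thesis
      proof
        show "S \<subseteq> \<Union> ((\<lambda>C. p ` rel_preimage E phi C) ` \<D>)"
        proof
          fix x assume "x \<in> S"
          then have x: "x \<in> topspace X" "phib x \<in> U" unfolding S_def by auto
          then obtain C where "C \<in> \<D>" "phib x \<in> q ` C" using G(3) D(3) by blast
          then show "x \<in> \<Union> ((\<lambda>C. p ` rel_preimage E phi C) ` \<D>)" using eq x by blast
        qed
        show "\<Union> ((\<lambda>C. p ` rel_preimage E phi C) ` \<D>) \<subseteq> S"
          using eq sub unfolding S_def by blast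
      qed
    qed
    moreover have "compactin X (\<Union> ((\<lambda>C. p ` rel_preimage E phi C) ` \<D>))"
      apply (rule compactin_Union)
      using D(2) apply blast
      using D(1) rp image_compactin[OF _ cp] unfolding \<C>_def by blast
    ultimately have "compactin X S" by simp
    with oS show "{x \<in> topspace X. phib x \<in> U} \<in> compact_opens X"
      unfolding compact_opens_def S_def by blast
  qed auto
  have restr: "rel_preimage E phi (etale_restr F q a b C) =
      etale_restr E p a' {x \<in> topspace X. phib x \<in> b} (rel_preimage E phi C)" for a a' b C
    unfolding etale_restr_def rel_preimage_def using rm pX by fastforce
  show ?thesis
    unfolding bset_morphism_def
  proof (intro conjI ballI impI)
    fix C assume "C \<in> co_sections F q"
    then have "C \<subseteq> topspace F" unfolding co_sections_def by (auto dest: compactin_subset_topspace)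
    then show "p ` rel_preimage E phi C = {x \<in> topspace X. phib x \<in> q ` C}" by (rule img)
  next
    fix C a b assume "C \<in> co_sections F q" "a \<in> compact_opens Y" "b \<in> compact_opens Y" "q ` C = a \<and> b \<subseteq> a"
    show "rel_preimage E phi (etale_restr F q a b C) =
      etale_restr E p {x \<in> topspace X. phib x \<in> a} {x \<in> topspace X. phib x \<in> b} (rel_preimage E phi C)"
      by (rule restr)
  qed (use part1 bahom in auto)
qed

end
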